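(* Let $f$ and $g_n$ ($n\in\mathbb{Z}^+$) be non-constant entire functions. If $\lim_{n\to\infty}(g_n\circ\cdots\circ g_1\circ f)=F$ uniformly on compact subsets of $\mathbb{C}$, then $$\bigcup_{n=0}^{\infty}{\rm Aut}(g_n\circ\cdots\circ g_1\circ f)\subseteq{\rm Aut}(F),$$ where the term with $n=0$ is ${\rm Aut}(f)$.
   Context: For a function $h$, ${\rm Aut}(h)$ is the set of automorphic functions of $h$: (generally multivalued) analytic functions $\phi$, or branches of such on domains, with $h(\phi(z))=h(z)$ on the domain of definition of $\phi$. If $F$ is constant, ${\rm Aut}(F)$ is by convention the set of all functions. *)

theory Defs
  imports "HOL-Complex_Analysis.Complex_Analysis"
begin

text \<open>A branch of an analytic function: a pair (phi, D) with D a domain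
  (nonempty open connected subset of C) and phi holomorphic on D.\<close>

definition is_constant :: "(complex \<Rightarrow> complex) \<Rightarrow> bool" where
  "is_constant h \<longleftrightarrow> (\<exists>c. \<forall>z. h z = c)"

definition Aut :: "(complex \<Rightarrow> complex) \<Rightarrow> ((complex \<Rightarrow> complex) \<times> complex set) set" where
  "Aut h = (if is_constant h then UNIV
            else {(\<phi>, D). open D \<and> connected D \<and> D \<noteq> {} \<and> \<phi> holomorphic_on D
                          \<and> (\<forall>z\<in>D. h (\<phi> z) = h z)})"

fun iter_comp :: "(nat \<Rightarrow> complex \<Rightarrow> complex) \<Rightarrow> (complex \<Rightarrow> complex) \<Rightarrow> nat \<Rightarrow> complex \<Rightarrow> complex" where
  "iter_comp g f 0 = f"
| "iter_comp g f (Suc n) = g (Suc n) \<circ> iter_comp g f n"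

end

theory Submission
  imports Defs
begin

lemma comp_nonconst:
  fixes g h :: "complex \<Rightarrow> complex"
  assumes hh: "h holomorphic_on UNIV" and hn: "\<not> is_constant h"
    and gh: "g holomorphic_on UNIV" and gn: "\<not> is_constant g"
  shows "\<not> is_constant (g \<circ> h)"
proof
  assume "is_constant (g \<circ> h)"
  then obtain c where c: "\<And>z. g (h z) = c" unfolding is_constant_def by auto
  have "\<not> h constant_on UNIV" using hn unfolding is_constant_def constant_on_def by auto
  then have op: "open (h ` UNIV)"
    by (intro open_mapping_thm[OF hh]) auto
  have "g z = c" for z
    by (rule analytic_continuation_open[OF op open_UNIV _ connected_UNIV _ gh, of "\<lambda>_. c"])
       (use c in auto)
  then show False using gn unfolding is_constant_def by auto
qed

lemma iter_props:
  fixes f :: "complex \<Rightarrow> complex" and g :: "nat \<Rightarrow> complex \<Rightarrow> complex"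
  assumes "f holomorphic_on UNIV" and "\<not> is_constant f"
    and "\<And>n. n \<ge> 1 \<Longrightarrow> g n holomorphic_on UNIV"
    and "\<And>n. n \<ge> 1 \<Longrightarrow> \<not> is_constant (g n)"
  shows "iter_comp g f n holomorphic_on UNIV \<and> \<not> is_constant (iter_comp g f n)"
proof (induction n)
  case 0 then show ?case using assms by simp
next
  case (Suc n)
  have g1: "g (Suc n) holomorphic_on UNIV" "\<not> is_constant (g (Suc n))" using assms by auto
  have "(g (Suc n) \<circ> iter_comp g f n) holomorphic_on UNIV"
    using Suc g1 holomorphic_on_compose[of "iter_comp g f n" UNIV "g (Suc n)"]
    by (metis holomorphic_on_subset subset_UNIV)
  then show ?case using comp_nonconst[of "iter_comp g f n" "g (Suc n)"] Suc g1 by (simp only: iter_comp.simps) blast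
qed

lemma iter_mono:
  assumes "n \<le> m" "iter_comp g f n x = iter_comp g f n y"
  shows "iter_comp g f m x = iter_comp g f m y"
  using assms by (induction m rule: dec_induct) auto

theorem proposition8:
  fixes f F :: "complex \<Rightarrow> complex" and g :: "nat \<Rightarrow> complex \<Rightarrow> complex"
  assumes "f holomorphic_on UNIV" and "\<not> is_constant f"
    and "\<And>n. n \<ge> 1 \<Longrightarrow> g n holomorphic_on UNIV"
    and "\<And>n. n \<ge> 1 \<Longrightarrow> \<not> is_constant (g n)"
    and "\<And>K. compact K \<Longrightarrow> uniform_limit K (\<lambda>n. iter_comp g f n) F sequentially"
  shows "(\<Union>n. Aut (iter_comp g f n)) \<subseteq> Aut F"
proof
  fix p assume "p \<in> (\<Union>n. Aut (iter_comp g f n))"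
  then obtain n where pn: "p \<in> Aut (iter_comp g f n)" by auto
  obtain \<phi> D where p: "p = (\<phi>, D)" by fastforce
  have nc: "\<not> is_constant (iter_comp g f n)" using iter_props[of f g n] assms(1-4) by blast
  have lim: "(\<lambda>m. iter_comp g f m z) \<longlonglongrightarrow> F z" for z
    using tendsto_uniform_limitI[OF assms(5)[of "{z}"], of z] by auto
  show "p \<in> Aut F"
  proof (cases "is_constant F")
    case True then show ?thesis by (simp add: Aut_def)
  next
    case False
    from pn nc have D: "open D \<and> connected D \<and> D \<noteq> {} \<and> \<phi> holomorphic_on D
        \<and> (\<forall>z\<in>D. iter_comp g f n (\<phi> z) = iter_comp g f n z)"
      by (simp add: Aut_def p)
    have "F (\<phi> z) = F z" if z: "z \<in> D" for z
    proof -
      have ev: "eventually (\<lambda>m. iter_comp g f m (\<phi> z) = iter_comp g f m z) sequentially"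
        using eventually_ge_at_top[of n] by eventually_elim (use iter_mono D z in blast)
      have "(\<lambda>m. iter_comp g f m (\<phi> z)) \<longlonglongrightarrow> F z"
        using Lim_transform_eventually[OF lim[of z]] ev by (simp add: eventually_mono)
      then show ?thesis using lim[of "\<phi> z"] LIMSEQ_unique by blast
    qed
    then show ?thesis using False D by (simp add: Aut_def p)
  qed
qed

end
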